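(* Let $\Xi$ be a $(k+l)$-graph such that for every vertex $v$ and every $j\in\{1,\dots,l\}$ we have $|v\Xi^{(0,e_j)}|=|\Xi^{(0,e_j)}v|=1$. Then for each vertex $v$ and $m\in\mathbb{N}^l$ there is a unique path $\eta_{v,m}\in\Xi^{(0,m)}v$, and there is a unique action $\alpha$ of $\mathbb{Z}^l$ on the $k$-graph $\Xi^{(\mathbb{N}^k,0)}$ by automorphisms satisfying $\alpha_m(\xi)=(\eta_{r(\xi),m}\xi)(0,d(\xi))$ for all $\xi\in\Xi^{(\mathbb{N}^k,0)}$ and $m\in\mathbb{N}^l$. Moreover, $\Xi$ is isomorphic to $\Xi^{(\mathbb{N}^k,0)}\times_\alpha\mathbb{Z}^l$.
   Context: A $k$-graph is a countable category with a functor $d$ to $\mathbb{N}^k$ with the unique factorisation property; vertices are degree-$0$ morphisms, $\Xi^n=d^{-1}(n)$, $v\Xi^n=\Xi^n\cap r^{-1}(v)$, $\Xi^nv=\Xi^n\cap s^{-1}(v)$. We identify $\mathbb{N}^{k+l}=\mathbb{N}^k\times\mathbb{N}^l$; $e_j$ is the $j$th generator of $\mathbb{N}^l$. For $\lambda$ of degree $p$ and $0\le n\le p$, $\lambda(0,n)$ is the unique path of degree $n$ with $\lambda=\lambda(0,n)\lambda'$ for some $\lambda'$. $\Xi^{(\mathbb{N}^k,0)}$ is the $k$-graph with morphisms $\bigcup_{p\in\mathbb{N}^k}\Xi^{(p,0)}$ and degree given by the first $k$ coordinates of $d$. An automorphism is a bijective degree-preserving functor. Given an action $\alpha$ of $\mathbb{Z}^l$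 on a $k$-graph $\Lambda$, $\Lambda\times_\alpha\mathbb{Z}^l$ is the $(k+l)$-graph with morphisms $\Lambda\times\mathbb{N}^l$, degree $(d(\lambda),m)$, $r(\lambda,m)=(r(\lambda),0)$, $s(\lambda,m)=(\alpha_{-m}(s(\lambda)),0)$, $(\mu,m)(\nu,n)=(\mu\alpha_m(\nu),m+n)$. An isomorphism of $(k+l)$-graphs is a bijective degree-preserving functor. *)

theory Defs
  imports Main "HOL-Library.Countable_Set"
begin

text \<open>Degrees in N^n are represented as functions nat => nat vanishing outside {..<n}.
  N^(k+l) = N^k x N^l: coordinates 0..k-1 are the N^k part, k..k+l-1 the N^l part.
  Categories are represented via their morphisms; objects are identified with
  identity morphisms (those x with src x = x).\<close>

record 'a kgraph =
  mor :: "'a set"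
  src :: "'a \<Rightarrow> 'a"
  rng :: "'a \<Rightarrow> 'a"
  cmp :: "'a \<Rightarrow> 'a \<Rightarrow> 'a"
  dg  :: "'a \<Rightarrow> nat \<Rightarrow> nat"

definition supp_in :: "nat \<Rightarrow> (nat \<Rightarrow> 'b::zero) \<Rightarrow> bool" where
  "supp_in n m \<longleftrightarrow> (\<forall>i\<ge>n. m i = 0)"

definition vadd :: "(nat \<Rightarrow> nat) \<Rightarrow> (nat \<Rightarrow> nat) \<Rightarrow> nat \<Rightarrow> nat" where
  "vadd m n = (\<lambda>i. m i + n i)"

definition kgraph :: "nat \<Rightarrow> 'a kgraph \<Rightarrow> bool" where
  "kgraph k G \<longleftrightarrow>
     countable (mor G) \<and>
     (\<forall>x\<in>mor G. src G x \<in> mor G \<and> rng G x \<in> mor G) \<and>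
     (\<forall>x\<in>mor G. src G (src G x) = src G x \<and> rng G (src G x) = src G x \<and>
                 src G (rng G x) = rng G x \<and> rng G (rng G x) = rng G x) \<and>
     (\<forall>x\<in>mor G. \<forall>y\<in>mor G. src G x = rng G y \<longrightarrow>
         cmp G x y \<in> mor G \<and> src G (cmp G x y) = src G y \<and> rng G (cmp G x y) = rng G x) \<and>
     (\<forall>x\<in>mor G. cmp G (rng G x) x = x \<and> cmp G x (src G x) = x) \<and>
     (\<forall>x\<in>mor G. \<forall>y\<in>mor G. \<forall>z\<in>mor G. src G x = rng G y \<longrightarrow> src G y = rng G z \<longrightarrow>
         cmp G (cmp G x y) z = cmp G x (cmp G y z)) \<and>
     (\<forall>x\<in>mor G. supp_in k (dg G x)) \<and>
     (\<forall>x\<in>mor G. src G x = x \<longrightarrow> dg G x = (\<lambda>_. 0)) \<and>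
     (\<forall>x\<in>mor G. \<forall>y\<in>mor G. src G x = rng G y \<longrightarrow>
         dg G (cmp G x y) = vadd (dg G x) (dg G y)) \<and>
     (\<forall>x\<in>mor G. \<forall>m n. dg G x = vadd m n \<longrightarrow>
        (\<exists>!p. fst p \<in> mor G \<and> snd p \<in> mor G \<and> src G (fst p) = rng G (snd p) \<and>
              dg G (fst p) = m \<and> dg G (snd p) = n \<and> cmp G (fst p) (snd p) = x))"

definition verts :: "'a kgraph \<Rightarrow> 'a set" where
  "verts G = {v \<in> mor G. dg G v = (\<lambda>_. 0)}"

definition seg :: "'a kgraph \<Rightarrow> 'a \<Rightarrow> (nat \<Rightarrow> nat) \<Rightarrow> 'a" where
  "seg G x n = (THE u. \<exists>w. u \<in> mor G \<and> w \<in> mor G \<and> src G u = rng G w \<and>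
                     dg G u = n \<and> cmp G u w = x)"

definition emb :: "nat \<Rightarrow> (nat \<Rightarrow> nat) \<Rightarrow> nat \<Rightarrow> nat" where
  "emb k m = (\<lambda>i. if k \<le> i then m (i - k) else 0)"

definition unitv :: "nat \<Rightarrow> nat \<Rightarrow> nat" where
  "unitv j = (\<lambda>i. if i = j then 1 else 0)"

definition eta :: "nat \<Rightarrow> 'a kgraph \<Rightarrow> 'a \<Rightarrow> (nat \<Rightarrow> nat) \<Rightarrow> 'a" where
  "eta k G v m = (THE e. e \<in> mor G \<and> dg G e = emb k m \<and> src G e = v)"

definition restrictk :: "nat \<Rightarrow> 'a kgraph \<Rightarrow> 'a kgraph" where
  "restrictk k G = \<lparr> mor = {x \<in> mor G. supp_in k (dg G x)}, src = src G, rng = rng G,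
       cmp = cmp G, dg = (\<lambda>x i. if i < k then dg G x i else 0) \<rparr>"

definition is_functor :: "'a kgraph \<Rightarrow> 'b kgraph \<Rightarrow> ('a \<Rightarrow> 'b) \<Rightarrow> bool" where
  "is_functor G H F \<longleftrightarrow>
     (\<forall>x\<in>mor G. F x \<in> mor H \<and> F (src G x) = src H (F x) \<and> F (rng G x) = rng H (F x)) \<and>
     (\<forall>x\<in>mor G. \<forall>y\<in>mor G. src G x = rng G y \<longrightarrow> F (cmp G x y) = cmp H (F x) (F y))"

definition graph_iso :: "'a kgraph \<Rightarrow> 'b kgraph \<Rightarrow> ('a \<Rightarrow> 'b) \<Rightarrow> bool" where
  "graph_iso G H F \<longleftrightarrow> is_functor G H F \<and> (\<forall>x\<in>mor G. dg H (F x) = dg G x) \<and>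
     bij_betw F (mor G) (mor H)"

text \<open>An action of Z^l (elements: nat => int supported in {..<l}) by automorphisms.\<close>
definition is_action :: "nat \<Rightarrow> 'a kgraph \<Rightarrow> ((nat \<Rightarrow> int) \<Rightarrow> 'a \<Rightarrow> 'a) \<Rightarrow> bool" where
  "is_action l L a \<longleftrightarrow>
     (\<forall>m. supp_in l m \<longrightarrow> graph_iso L L (a m)) \<and>
     (\<forall>x\<in>mor L. a (\<lambda>_. 0) x = x) \<and>
     (\<forall>m n. supp_in l m \<longrightarrow> supp_in l n \<longrightarrow>
        (\<forall>x\<in>mor L. a (\<lambda>i. m i + n i) x = a m (a n x)))"

definition intv :: "(nat \<Rightarrow> nat) \<Rightarrow> nat \<Rightarrow> int" where
  "intv m = (\<lambda>i. int (m i))"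

definition crossed :: "nat \<Rightarrow> nat \<Rightarrow> 'a kgraph \<Rightarrow> ((nat \<Rightarrow> int) \<Rightarrow> 'a \<Rightarrow> 'a)
    \<Rightarrow> ('a \<times> (nat \<Rightarrow> nat)) kgraph" where
  "crossed k l L a = \<lparr>
     mor = {(x, m). x \<in> mor L \<and> supp_in l m},
     src = (\<lambda>(x, m). (a (\<lambda>i. - int (m i)) (src L x), (\<lambda>_. 0))),
     rng = (\<lambda>(x, m). (rng L x, (\<lambda>_. 0))),
     cmp = (\<lambda>(x, m) (y, n). (cmp L x (a (intv m) y), vadd m n)),
     dg = (\<lambda>(x, m) i. if i < k then dg L x i else m (i - k)) \<rparr>"

definition prop36_action :: "nat \<Rightarrow> nat \<Rightarrow> 'a kgraph \<Rightarrow> ((nat \<Rightarrow> int) \<Rightarrow> 'a \<Rightarrow> 'a) \<Rightarrow> bool" where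
  "prop36_action k l X a \<longleftrightarrow> is_action l (restrictk k X) a \<and>
     (\<forall>x\<in>mor (restrictk k X). \<forall>m. supp_in l m \<longrightarrow>
        a (intv m) x = seg X (cmp X (eta k X (rng X x) m) x) (dg X x))"

end

theory Submission
  imports Defs
begin


lemma vadd_apply[simp]: "vadd m n i = m i + n i" by (simp add: vadd_def)
lemma vadd_comm: "vadd m n = vadd n m" by (auto simp: vadd_def)
lemma ex1_two: "\<exists>!p. P p \<Longrightarrow> P a \<Longrightarrow> P b \<Longrightarrow> a = b" by blast

locale kg =
  fixes K :: nat and X :: "'a kgraph"
  assumes kg: "kgraph K X"
begin

lemma K: "countable (mor X)"
  "\<forall>x\<in>mor X. src X x \<in> mor X \<and> rng X x \<in> mor X"
  "\<forall>x\<in>mor X. src X (src X x) = src X x \<and> rng X (src X x) = src X x \<and>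
                 src X (rng X x) = rng X x \<and> rng X (rng X x) = rng X x"
  "\<forall>x\<in>mor X. \<forall>y\<in>mor X. src X x = rng X y \<longrightarrow>
         cmp X x y \<in> mor X \<and> src X (cmp X x y) = src X y \<and> rng X (cmp X x y) = rng X x"
  "\<forall>x\<in>mor X. cmp X (rng X x) x = x \<and> cmp X x (src X x) = x"
  "\<forall>x\<in>mor X. \<forall>y\<in>mor X. \<forall>z\<in>mor X. src X x = rng X y \<longrightarrow> src X y = rng X z \<longrightarrow>
         cmp X (cmp X x y) z = cmp X x (cmp X y z)"
  "\<forall>x\<in>mor X. supp_in K (dg X x)"
  "\<forall>x\<in>mor X. src X x = x \<longrightarrow> dg X x = (\<lambda>_. 0)"
  "\<forall>x\<in>mor X. \<forall>y\<in>mor X. src X x = rng X y \<longrightarrow>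
         dg X (cmp X x y) = vadd (dg X x) (dg X y)"
  "\<forall>x\<in>mor X. \<forall>m n. dg X x = vadd m n \<longrightarrow>
        (\<exists>!p. fst p \<in> mor X \<and> snd p \<in> mor X \<and> src X (fst p) = rng X (snd p) \<and>
              dg X (fst p) = m \<and> dg X (snd p) = n \<and> cmp X (fst p) (snd p) = x)"
  by (insert kg[unfolded kgraph_def], elim conjE, assumption)+

lemma src_mor[simp]: "x \<in> mor X \<Longrightarrow> src X x \<in> mor X" using K by blast
lemma rng_mor[simp]: "x \<in> mor X \<Longrightarrow> rng X x \<in> mor X" using K by blast
lemma src_src[simp]: "x \<in> mor X \<Longrightarrow> src X (src X x) = src X x" using K by blast
lemma rng_src[simp]: "x \<in> mor X \<Longrightarrow> rng X (src X x) = src X x" using K by blast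
lemma src_rng[simp]: "x \<in> mor X \<Longrightarrow> src X (rng X x) = rng X x" using K by blast
lemma rng_rng[simp]: "x \<in> mor X \<Longrightarrow> rng X (rng X x) = rng X x" using K by blast
lemma cmp_mor[simp]: "x \<in> mor X \<Longrightarrow> y \<in> mor X \<Longrightarrow> src X x = rng X y \<Longrightarrow> cmp X x y \<in> mor X"
  using K by blast
lemma src_cmp[simp]: "x \<in> mor X \<Longrightarrow> y \<in> mor X \<Longrightarrow> src X x = rng X y \<Longrightarrow> src X (cmp X x y) = src X y"
  using K by blast
lemma rng_cmp[simp]: "x \<in> mor X \<Longrightarrow> y \<in> mor X \<Longrightarrow> src X x = rng X y \<Longrightarrow> rng X (cmp X x y) = rng X x"
  using K by blast
lemma cmp_rng[simp]: "x \<in> mor X \<Longrightarrow> cmp X (rng X x) x = x" using K by blast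
lemma cmp_src[simp]: "x \<in> mor X \<Longrightarrow> cmp X x (src X x) = x" using K by blast
lemma assoc: "x \<in> mor X \<Longrightarrow> y \<in> mor X \<Longrightarrow> z \<in> mor X \<Longrightarrow> src X x = rng X y \<Longrightarrow> src X y = rng X z \<Longrightarrow>
   cmp X (cmp X x y) z = cmp X x (cmp X y z)" using K by blast
lemma dg_supp: "x \<in> mor X \<Longrightarrow> supp_in K (dg X x)" using K by blast
lemma dg_id: "x \<in> mor X \<Longrightarrow> src X x = x \<Longrightarrow> dg X x = (\<lambda>_. 0)" using K by blast
lemma dg_cmp[simp]: "x \<in> mor X \<Longrightarrow> y \<in> mor X \<Longrightarrow> src X x = rng X y \<Longrightarrow> dg X (cmp X x y) = vadd (dg X x) (dg X y)"
  using K by blast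
lemma fact: "x \<in> mor X \<Longrightarrow> dg X x = vadd m n \<Longrightarrow>
        (\<exists>!p. fst p \<in> mor X \<and> snd p \<in> mor X \<and> src X (fst p) = rng X (snd p) \<and>
              dg X (fst p) = m \<and> dg X (snd p) = n \<and> cmp X (fst p) (snd p) = x)"
  using K by blast

lemma fact_ex:
  assumes "x \<in> mor X" "dg X x = vadd m n"
  obtains u w where "u \<in> mor X" "w \<in> mor X" "src X u = rng X w" "dg X u = m" "dg X w = n" "cmp X u w = x"
  using fact[OF assms] by auto

lemma fact_unique:
  assumes "u \<in> mor X" "w \<in> mor X" "u' \<in> mor X" "w' \<in> mor X"
    "src X u = rng X w" "src X u' = rng X w'" "dg X u = dg X u'"
    "cmp X u w = cmp X u' w'"
  shows "u = u' \<and> w = w'"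
proof -
  let ?x = "cmp X u w"
  have x: "?x \<in> mor X" using assms by simp
  have dx: "dg X ?x = vadd (dg X u) (dg X w)" using assms(1,2,5) by simp
  have "dg X ?x = vadd (dg X u') (dg X w')" using assms by (metis dg_cmp)
  hence dw: "dg X w = dg X w'" using dx assms(7) by (auto simp: fun_eq_iff)
  have "(u,w) = (u',w')"
    by (rule ex1_two[OF fact[OF x dx]]) (use assms dw in auto)
  thus ?thesis by simp
qed

lemma vert_id:
  assumes "x \<in> mor X" "dg X x = (\<lambda>_. 0)"
  shows "rng X x = x" "src X x = x"
proof -
  have dx: "dg X x = vadd (\<lambda>_. 0) (\<lambda>_. 0)" using assms by (simp add: vadd_def)
  have d1: "dg X (rng X x) = (\<lambda>_. 0)" "dg X (src X x) = (\<lambda>_. 0)" using assms dg_id by auto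
  have "(rng X x, x) = (x, src X x)"
    by (rule ex1_two[OF fact[OF assms(1) dx]]) (use assms d1 in auto)
  thus "rng X x = x" "src X x = x" by auto
qed

lemma verts_iff: "v \<in> verts X \<longleftrightarrow> v \<in> mor X \<and> dg X v = (\<lambda>_. 0)" by (simp add: verts_def)

lemma src_verts[simp]: "x \<in> mor X \<Longrightarrow> src X x \<in> verts X"
  by (simp add: verts_iff dg_id)
lemma rng_verts[simp]: "x \<in> mor X \<Longrightarrow> rng X x \<in> verts X"
  by (simp add: verts_iff dg_id)
lemma verts_mor[simp]: "v \<in> verts X \<Longrightarrow> v \<in> mor X" by (simp add: verts_iff)
lemma verts_src[simp]: "v \<in> verts X \<Longrightarrow> src X v = v" using vert_id verts_iff by blast
lemma verts_rng[simp]: "v \<in> verts X \<Longrightarrow> rng X v = v" using vert_id verts_iff by blast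
lemma verts_dg[simp]: "v \<in> verts X \<Longrightarrow> dg X v = (\<lambda>_. 0)" by (simp add: verts_iff)

lemma seg_eq:
  assumes "u \<in> mor X" "w \<in> mor X" "src X u = rng X w" "cmp X u w = x" "dg X u = n"
  shows "seg X x n = u"
  unfolding seg_def
proof (rule the_equality)
  show "\<exists>w. u \<in> mor X \<and> w \<in> mor X \<and> src X u = rng X w \<and> dg X u = n \<and> cmp X u w = x"
    using assms by blast
next
  fix u' assume "\<exists>w. u' \<in> mor X \<and> w \<in> mor X \<and> src X u' = rng X w \<and> dg X u' = n \<and> cmp X u' w = x"
  then obtain w' where "u' \<in> mor X" "w' \<in> mor X" "src X u' = rng X w'" "dg X u' = n" "cmp X u' w' = x" by blast
  with assms fact_unique show "u' = u" by metis
qed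

end


lemma emb_zero[simp]: "emb k (\<lambda>_. 0) = (\<lambda>_. 0)" by (simp add: emb_def)
lemma emb_vadd: "emb k (vadd p q) = vadd (emb k p) (emb k q)" by (auto simp: emb_def fun_eq_iff)

lemma card1_ex1: "card {x. P x} = 1 \<Longrightarrow> \<exists>!x. P x"
proof -
  assume "card {x. P x} = 1"
  then obtain a where "{x. P x} = {a}" using card_1_singletonE by blast
  hence "\<And>x. P x \<longleftrightarrow> x = a" by (auto simp: set_eq_iff)
  thus ?thesis by auto
qed

lemma supp_sum0: "supp_in l (p::nat\<Rightarrow>nat) \<Longrightarrow> sum p {..<l} = 0 \<Longrightarrow> p = (\<lambda>_. 0)"
proof
  fix x assume a: "supp_in l p" "sum p {..<l} = 0"
  show "p x = 0"
  proof (cases "x < l")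
    case True thus ?thesis using a(2) by simp
  next
    case False thus ?thesis using a(1) unfolding supp_in_def by simp
  qed
qed

lemma supp_dec:
  assumes "supp_in l (p :: nat \<Rightarrow> nat)" "sum p {..<l} = Suc n"
  shows "\<exists>j<l. \<exists>p'. supp_in l p' \<and> sum p' {..<l} = n \<and> p = vadd p' (unitv j)"
proof -
  have "\<exists>j<l. p j > 0"
  proof (rule ccontr)
    assume "\<not> ?thesis"
    hence "sum p {..<l} = 0" by auto
    thus False using assms by simp
  qed
  then obtain j where j: "j < l" "p j > 0" by blast
  define p' where "p' = p(j := p j - 1)"
  have s1: "sum p {..<l} = p j + sum p ({..<l} - {j})" using j by (simp add: sum.remove)
  have s2: "sum p' {..<l} = p' j + sum p' ({..<l} - {j})" using j by (simp add: sum.remove)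
  have "sum p' ({..<l} - {j}) = sum p ({..<l} - {j})" by (rule sum.cong) (auto simp: p'_def)
  hence "sum p' {..<l} = n" using s1 s2 assms(2) j by (simp add: p'_def)
  moreover have "supp_in l p'" using assms(1) j unfolding supp_in_def p'_def by auto
  moreover have "p = vadd p' (unitv j)" using j by (auto simp: fun_eq_iff p'_def unitv_def)
  ultimately show ?thesis using j by blast
qed

locale kgl = kg "k + l" X for k l :: nat and X :: "'a kgraph" +
  assumes units: "\<forall>v\<in>verts X. \<forall>j<l.
           card {x \<in> mor X. dg X x = emb k (unitv j) \<and> rng X x = v} = 1 \<and>
           card {x \<in> mor X. dg X x = emb k (unitv j) \<and> src X x = v} = 1"
begin

lemma unit_src: "v \<in> verts X \<Longrightarrow> j < l \<Longrightarrow> \<exists>!x. x \<in> mor X \<and> dg X x = emb k (unitv j) \<and> src X x = v"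
  using units card1_ex1[of "\<lambda>x. x \<in> mor X \<and> dg X x = emb k (unitv j) \<and> src X x = v"] by simp
lemma unit_rng: "v \<in> verts X \<Longrightarrow> j < l \<Longrightarrow> \<exists>!x. x \<in> mor X \<and> dg X x = emb k (unitv j) \<and> rng X x = v"
  using units card1_ex1[of "\<lambda>x. x \<in> mor X \<and> dg X x = emb k (unitv j) \<and> rng X x = v"] by simp

lemma path_src_n: "\<forall>p v. supp_in l p \<longrightarrow> sum p {..<l} = n \<longrightarrow> v \<in> verts X \<longrightarrow>
   (\<exists>!e. e \<in> mor X \<and> dg X e = emb k p \<and> src X e = v)"
proof (induction n)
  case 0
  show ?case
  proof (intro allI impI)
    fix p v assume "supp_in l (p::nat\<Rightarrow>nat)" "sum p {..<l} = 0" "v \<in> verts X"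
    hence p: "p = (\<lambda>_. 0)" using supp_sum0 by blast
    show "\<exists>!e. e \<in> mor X \<and> dg X e = emb k p \<and> src X e = v"
    proof (rule ex1I[of _ v])
      show "v \<in> mor X \<and> dg X v = emb k p \<and> src X v = v" using \<open>v \<in> verts X\<close> p by simp
    next
      fix e assume "e \<in> mor X \<and> dg X e = emb k p \<and> src X e = v"
      thus "e = v" using p vert_id by auto
    qed
  qed
next
  case (Suc n)
  show ?case
  proof (intro allI impI)
    fix p v assume a: "supp_in l (p::nat\<Rightarrow>nat)" "sum p {..<l} = Suc n" "v \<in> verts X"
    obtain j p' where j: "j < l" "supp_in l p'" "sum p' {..<l} = n" "p = vadd p' (unitv j)"
      using supp_dec[OF a(1,2)] by blast
    obtain x where x0: "x \<in> mor X \<and> dg X x = emb k (unitv j) \<and> src X x = v"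
      and xu0: "\<forall>x'. x' \<in> mor X \<and> dg X x' = emb k (unitv j) \<and> src X x' = v \<longrightarrow> x' = x"
      using unit_src[OF a(3) j(1)] by blast
    have x: "x \<in> mor X" "dg X x = emb k (unitv j)" "src X x = v" using x0 by auto
    have xu: "\<And>x'. x' \<in> mor X \<Longrightarrow> dg X x' = emb k (unitv j) \<Longrightarrow> src X x' = v \<Longrightarrow> x' = x"
      using xu0 by blast
    have "\<exists>!e. e \<in> mor X \<and> dg X e = emb k p' \<and> src X e = rng X x"
      using Suc.IH[rule_format, OF j(2) j(3) rng_verts[OF x(1)]] .
    then obtain y where y0: "y \<in> mor X \<and> dg X y = emb k p' \<and> src X y = rng X x"
      and yu0: "\<forall>y'. y' \<in> mor X \<and> dg X y' = emb k p' \<and> src X y' = rng X x \<longrightarrow> y' = y"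
      by blast
    have y: "y \<in> mor X" "dg X y = emb k p'" "src X y = rng X x" using y0 by auto
    have yu: "\<And>y'. y' \<in> mor X \<Longrightarrow> dg X y' = emb k p' \<Longrightarrow> src X y' = rng X x \<Longrightarrow> y' = y"
      using yu0 by blast
    have ep: "emb k p = vadd (emb k p') (emb k (unitv j))" using j(4) emb_vadd by simp
    show "\<exists>!e. e \<in> mor X \<and> dg X e = emb k p \<and> src X e = v"
    proof (rule ex1I[of _ "cmp X y x"])
      show "cmp X y x \<in> mor X \<and> dg X (cmp X y x) = emb k p \<and> src X (cmp X y x) = v"
        using x y ep by simp
    next
      fix e assume e: "e \<in> mor X \<and> dg X e = emb k p \<and> src X e = v"
      obtain u w where uw: "u \<in> mor X" "w \<in> mor X" "src X u = rng X w" "dg X u = emb k p'"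
        "dg X w = emb k (unitv j)" "cmp X u w = e"
        by (rule fact_ex[of e "emb k p'" "emb k (unitv j)"]) (use e ep in auto)
      have "src X (cmp X u w) = src X w" using uw(1-3) by simp
      hence "src X w = v" using uw(6) e by simp
      hence wx: "w = x" using xu uw(2,5) by blast
      hence uy: "u = y" using yu uw(1,3,4) by blast
      show "e = cmp X y x" using uw(6) wx uy by simp
    qed
  qed
qed

lemma path_rng_n: "\<forall>p v. supp_in l p \<longrightarrow> sum p {..<l} = n \<longrightarrow> v \<in> verts X \<longrightarrow>
   (\<exists>!e. e \<in> mor X \<and> dg X e = emb k p \<and> rng X e = v)"
proof (induction n)
  case 0
  show ?case
  proof (intro allI impI)
    fix p v assume "supp_in l (p::nat\<Rightarrow>nat)" "sum p {..<l} = 0" "v \<in> verts X"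
    hence p: "p = (\<lambda>_. 0)" using supp_sum0 by blast
    show "\<exists>!e. e \<in> mor X \<and> dg X e = emb k p \<and> rng X e = v"
    proof (rule ex1I[of _ v])
      show "v \<in> mor X \<and> dg X v = emb k p \<and> rng X v = v" using \<open>v \<in> verts X\<close> p by simp
    next
      fix e assume "e \<in> mor X \<and> dg X e = emb k p \<and> rng X e = v"
      thus "e = v" using p vert_id by auto
    qed
  qed
next
  case (Suc n)
  show ?case
  proof (intro allI impI)
    fix p v assume a: "supp_in l (p::nat\<Rightarrow>nat)" "sum p {..<l} = Suc n" "v \<in> verts X"
    obtain j p' where j: "j < l" "supp_in l p'" "sum p' {..<l} = n" "p = vadd p' (unitv j)"
      using supp_dec[OF a(1,2)] by blast
    obtain x where x0: "x \<in> mor X \<and> dg X x = emb k (unitv j) \<and> rng X x = v"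
      and xu0: "\<forall>x'. x' \<in> mor X \<and> dg X x' = emb k (unitv j) \<and> rng X x' = v \<longrightarrow> x' = x"
      using unit_rng[OF a(3) j(1)] by blast
    have x: "x \<in> mor X" "dg X x = emb k (unitv j)" "rng X x = v" using x0 by auto
    have xu: "\<And>x'. x' \<in> mor X \<Longrightarrow> dg X x' = emb k (unitv j) \<Longrightarrow> rng X x' = v \<Longrightarrow> x' = x"
      using xu0 by blast
    have "\<exists>!e. e \<in> mor X \<and> dg X e = emb k p' \<and> rng X e = src X x"
      using Suc.IH[rule_format, OF j(2) j(3) src_verts[OF x(1)]] .
    then obtain y where y0: "y \<in> mor X \<and> dg X y = emb k p' \<and> rng X y = src X x"
      and yu0: "\<forall>y'. y' \<in> mor X \<and> dg X y' = emb k p' \<and> rng X y' = src X x \<longrightarrow> y' = y"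
      by blast
    have y: "y \<in> mor X" "dg X y = emb k p'" "rng X y = src X x" using y0 by auto
    have yu: "\<And>y'. y' \<in> mor X \<Longrightarrow> dg X y' = emb k p' \<Longrightarrow> rng X y' = src X x \<Longrightarrow> y' = y"
      using yu0 by blast
    have ep: "emb k p = vadd (emb k (unitv j)) (emb k p')" using j(4) emb_vadd vadd_comm by metis
    show "\<exists>!e. e \<in> mor X \<and> dg X e = emb k p \<and> rng X e = v"
    proof (rule ex1I[of _ "cmp X x y"])
      show "cmp X x y \<in> mor X \<and> dg X (cmp X x y) = emb k p \<and> rng X (cmp X x y) = v"
        using x y ep by simp
    next
      fix e assume e: "e \<in> mor X \<and> dg X e = emb k p \<and> rng X e = v"
      obtain u w where uw: "u \<in> mor X" "w \<in> mor X" "src X u = rng X w" "dg X u = emb k (unitv j)"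
        "dg X w = emb k p'" "cmp X u w = e"
        by (rule fact_ex[of e "emb k (unitv j)" "emb k p'"]) (use e ep in auto)
      have "rng X (cmp X u w) = rng X u" using uw(1-3) by simp
      hence "rng X u = v" using uw(6) e by simp
      hence ux: "u = x" using xu uw(1,4) by blast
      hence wy: "w = y" using yu[OF uw(2) uw(5)] uw(3) by simp
      show "e = cmp X x y" using uw(6) ux wy by simp
    qed
  qed
qed

lemma path_src: "supp_in l p \<Longrightarrow> v \<in> verts X \<Longrightarrow> \<exists>!e. e \<in> mor X \<and> dg X e = emb k p \<and> src X e = v"
  using path_src_n by blast
lemma path_rng: "supp_in l p \<Longrightarrow> v \<in> verts X \<Longrightarrow> \<exists>!e. e \<in> mor X \<and> dg X e = emb k p \<and> rng X e = v"
  using path_rng_n by blast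

end


lemma supp_vadd: "supp_in l p \<Longrightarrow> supp_in l q \<Longrightarrow> supp_in l (vadd p q)"
  by (simp add: supp_in_def)

context kgl
begin

lemma eta_props:
  assumes "supp_in l p" "v \<in> verts X"
  shows "eta k X v p \<in> mor X \<and> dg X (eta k X v p) = emb k p \<and> src X (eta k X v p) = v"
  unfolding eta_def by (rule theI'[OF path_src[OF assms]])

lemma eta_mor[simp]: "supp_in l p \<Longrightarrow> v \<in> verts X \<Longrightarrow> eta k X v p \<in> mor X" using eta_props by blast
lemma eta_dg[simp]: "supp_in l p \<Longrightarrow> v \<in> verts X \<Longrightarrow> dg X (eta k X v p) = emb k p" using eta_props by blast
lemma eta_src[simp]: "supp_in l p \<Longrightarrow> v \<in> verts X \<Longrightarrow> src X (eta k X v p) = v" using eta_props by blast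

lemma eta_uniq:
  assumes "supp_in l p" "e \<in> mor X" "dg X e = emb k p"
  shows "eta k X (src X e) p = e"
  unfolding eta_def by (rule the1_equality[OF path_src[OF assms(1) src_verts[OF assms(2)]]]) (use assms in simp)

definition zeta where "zeta v p = (THE e. e \<in> mor X \<and> dg X e = emb k p \<and> rng X e = v)"

lemma zeta_props:
  assumes "supp_in l p" "v \<in> verts X"
  shows "zeta v p \<in> mor X \<and> dg X (zeta v p) = emb k p \<and> rng X (zeta v p) = v"
  unfolding zeta_def by (rule theI'[OF path_rng[OF assms]])

lemma rng_eta_inj:
  assumes "supp_in l p" "v \<in> verts X" "w \<in> verts X" "rng X (eta k X v p) = rng X (eta k X w p)"
  shows "v = w"
proof -
  have "eta k X v p = eta k X w p"
    using ex1_two[OF path_rng[OF assms(1) rng_verts[OF eta_mor[OF assms(1) assms(3)]]]] assms by simp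
  thus ?thesis using assms eta_src by metis
qed

definition alpha where "alpha p x = seg X (cmp X (eta k X (rng X x) p) x) (dg X x)"

lemma alpha_char:
  assumes p: "supp_in l p" and x: "x \<in> mor X"
  shows "alpha p x \<in> mor X" "dg X (alpha p x) = dg X x"
    "src X (alpha p x) = rng X (eta k X (src X x) p)"
    "cmp X (alpha p x) (eta k X (src X x) p) = cmp X (eta k X (rng X x) p) x"
proof -
  let ?e = "eta k X (rng X x) p"
  have e: "?e \<in> mor X" "dg X ?e = emb k p" "src X ?e = rng X x" using p x by simp_all
  have ex: "cmp X ?e x \<in> mor X" using e x by simp
  have "dg X (cmp X ?e x) = vadd (emb k p) (dg X x)" using e x by simp
  hence dex: "dg X (cmp X ?e x) = vadd (dg X x) (emb k p)" by (simp add: vadd_comm)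
  obtain u w where uw: "u \<in> mor X" "w \<in> mor X" "src X u = rng X w" "dg X u = dg X x"
    "dg X w = emb k p" "cmp X u w = cmp X ?e x"
    by (rule fact_ex[OF ex dex])
  have a: "alpha p x = u" unfolding alpha_def by (rule seg_eq[OF uw(1-3) uw(6) uw(4)])
  have "src X (cmp X u w) = src X w" using uw(1-3) by simp
  moreover have "src X (cmp X ?e x) = src X x" using e x by simp
  ultimately have sw: "src X w = src X x" using uw(6) by simp
  have w: "eta k X (src X x) p = w" using eta_uniq[OF p uw(2) uw(5)] sw by simp
  show "alpha p x \<in> mor X" "dg X (alpha p x) = dg X x"
    "src X (alpha p x) = rng X (eta k X (src X x) p)"
    "cmp X (alpha p x) (eta k X (src X x) p) = cmp X (eta k X (rng X x) p) x"
    using a uw w by simp_all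
qed

lemma alpha_uniq:
  assumes p: "supp_in l p" and x: "x \<in> mor X" and u: "u \<in> mor X" "dg X u = dg X x"
    "src X u = rng X (eta k X (src X x) p)"
    "cmp X u (eta k X (src X x) p) = cmp X (eta k X (rng X x) p) x"
  shows "alpha p x = u"
  unfolding alpha_def
  by (rule seg_eq[OF u(1) eta_mor[OF p src_verts[OF x]] u(3) u(4) u(2)])

lemma alpha_vert:
  assumes p: "supp_in l p" and v: "v \<in> verts X"
  shows "alpha p v = rng X (eta k X v p)"
proof (rule alpha_uniq[OF p])
  let ?e = "eta k X v p"
  have e: "?e \<in> mor X" "src X ?e = v" using p v by simp_all
  show "v \<in> mor X" using v by simp
  show "rng X ?e \<in> mor X" using e by simp
  show "dg X (rng X ?e) = dg X v" using e v by simp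
  show "src X (rng X ?e) = rng X (eta k X (src X v) p)" using e v by simp
  show "cmp X (rng X ?e) (eta k X (src X v) p) = cmp X (eta k X (rng X v) p) v"
    using e v by (metis cmp_rng cmp_src verts_rng verts_src)
qed

end


lemma supp_zero[simp]: "supp_in l (\<lambda>_. 0)" by (simp add: supp_in_def)

context kgl
begin

lemma alpha_mor[simp]: "supp_in l p \<Longrightarrow> x \<in> mor X \<Longrightarrow> alpha p x \<in> mor X" using alpha_char by blast
lemma alpha_dg[simp]: "supp_in l p \<Longrightarrow> x \<in> mor X \<Longrightarrow> dg X (alpha p x) = dg X x" using alpha_char by blast
lemma alpha_src: "supp_in l p \<Longrightarrow> x \<in> mor X \<Longrightarrow> src X (alpha p x) = rng X (eta k X (src X x) p)"
  using alpha_char by blast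

lemma alpha_rng:
  assumes p: "supp_in l p" and x: "x \<in> mor X"
  shows "rng X (alpha p x) = rng X (eta k X (rng X x) p)"
proof -
  have "rng X (cmp X (alpha p x) (eta k X (src X x) p)) = rng X (alpha p x)"
    using p x alpha_char(1)[OF p x] alpha_char(3)[OF p x] by simp
  moreover have "rng X (cmp X (eta k X (rng X x) p) x) = rng X (eta k X (rng X x) p)"
    using p x by simp
  ultimately show ?thesis using alpha_char(4)[OF p x] by simp
qed

lemma eta_zero: "v \<in> verts X \<Longrightarrow> eta k X v (\<lambda>_. 0) = v"
  using eta_uniq[of "\<lambda>_. 0" v] by simp

lemma alpha_zero: "x \<in> mor X \<Longrightarrow> alpha (\<lambda>_. 0) x = x"
  by (rule alpha_uniq) (simp_all add: eta_zero)

lemma eta_add: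
  assumes p: "supp_in l p" and q: "supp_in l q" and v: "v \<in> verts X"
  shows "eta k X v (vadd p q) = cmp X (eta k X (rng X (eta k X v q)) p) (eta k X v q)"
proof -
  let ?E = "cmp X (eta k X (rng X (eta k X v q)) p) (eta k X v q)"
  have m: "?E \<in> mor X" using p q v by simp
  have s: "src X ?E = v" using p q v by simp
  have d: "dg X ?E = emb k (vadd p q)" using p q v by (simp add: emb_vadd)
  show ?thesis using eta_uniq[OF supp_vadd[OF p q] m d] s by simp
qed

lemma alpha_cmp:
  assumes p: "supp_in l p" and x: "x \<in> mor X" and y: "y \<in> mor X" and xy: "src X x = rng X y"
  shows "alpha p (cmp X x y) = cmp X (alpha p x) (alpha p y)"
proof -
  let ?u1 = "alpha p x" and ?u2 = "alpha p y"
  let ?ex = "eta k X (src X x) p" and ?ey = "eta k X (src X y) p" and ?erx = "eta k X (rng X x) p"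
  have ex: "?ex \<in> mor X" and ey: "?ey \<in> mor X" and erx: "?erx \<in> mor X" using p x y by simp_all
  have c1: "cmp X ?u1 ?ex = cmp X ?erx x" using alpha_char(4)[OF p x] .
  have c2: "cmp X ?u2 ?ey = cmp X ?ex y" using alpha_char(4)[OF p y] xy by simp
  have u1: "?u1 \<in> mor X" and u2: "?u2 \<in> mor X" using p x y by simp_all
  have s1: "src X ?u1 = rng X ?ex" using alpha_src[OF p x] .
  have s2: "src X ?u2 = rng X ?ey" using alpha_src[OF p y] .
  have r2: "rng X ?u2 = rng X ?ex" using alpha_rng[OF p y] xy by simp
  have su: "src X ?u1 = rng X ?u2" using s1 r2 by simp
  have sx: "src X ?erx = rng X x" using p x by simp
  have sex: "src X ?ex = rng X y" using p x y xy by simp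
  show ?thesis
  proof (rule alpha_uniq[OF p])
    show "cmp X x y \<in> mor X" using x y xy by simp
    show "cmp X ?u1 ?u2 \<in> mor X" using u1 u2 su by simp
    show "dg X (cmp X ?u1 ?u2) = dg X (cmp X x y)" using u1 u2 su x y xy p by simp
    show "src X (cmp X ?u1 ?u2) = rng X (eta k X (src X (cmp X x y)) p)" using u1 u2 su x y xy s2 by simp
    have "cmp X (cmp X ?u1 ?u2) ?ey = cmp X ?u1 (cmp X ?u2 ?ey)"
      using assoc[OF u1 u2 ey su s2] .
    also have "\<dots> = cmp X ?u1 (cmp X ?ex y)" using c2 by simp
    also have "\<dots> = cmp X (cmp X ?u1 ?ex) y" using assoc[OF u1 ex y s1 sex] by simp
    also have "\<dots> = cmp X (cmp X ?erx x) y" using c1 by simp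
    also have "\<dots> = cmp X ?erx (cmp X x y)" using assoc[OF erx x y sx xy] .
    finally show "cmp X (cmp X ?u1 ?u2) (eta k X (src X (cmp X x y)) p) =
        cmp X (eta k X (rng X (cmp X x y)) p) (cmp X x y)" using x y xy by simp
  qed
qed

lemma alpha_add:
  assumes p: "supp_in l p" and q: "supp_in l q" and x: "x \<in> mor X"
  shows "alpha (vadd p q) x = alpha p (alpha q x)"
proof -
  let ?u = "alpha q x"
  let ?u' = "alpha p ?u"
  let ?eq = "eta k X (src X x) q" and ?erq = "eta k X (rng X x) q"
  let ?ep = "eta k X (src X ?u) p" and ?erp = "eta k X (rng X ?u) p"
  have u: "?u \<in> mor X" and u': "?u' \<in> mor X" using p q x by simp_all
  have eq: "?eq \<in> mor X" and erq: "?erq \<in> mor X" using q x by simp_all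
  have ep: "?ep \<in> mor X" and erp: "?erp \<in> mor X" using p u by simp_all
  have su: "src X ?u = rng X ?eq" using alpha_src[OF q x] .
  have ru: "rng X ?u = rng X ?erq" using alpha_rng[OF q x] .
  have su': "src X ?u' = rng X ?ep" using alpha_src[OF p u] .
  have sep: "src X ?ep = rng X ?eq" using p q x u su by simp
  have serp: "src X ?erp = rng X ?erq" using p q x u ru by simp
  have serq: "src X ?erq = rng X x" using q x by simp
  have E1: "eta k X (src X x) (vadd p q) = cmp X ?ep ?eq"
    using eta_add[OF p q src_verts[OF x]] su by simp
  have E2: "eta k X (rng X x) (vadd p q) = cmp X ?erp ?erq"
    using eta_add[OF p q rng_verts[OF x]] ru by simp
  have c1: "cmp X ?u' ?ep = cmp X ?erp ?u" using alpha_char(4)[OF p u] .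
  have c2: "cmp X ?u ?eq = cmp X ?erq x" using alpha_char(4)[OF q x] .
  show ?thesis
  proof (rule alpha_uniq[OF supp_vadd[OF p q] x u'])
    show "dg X ?u' = dg X x" using p q x by simp
    show "src X ?u' = rng X (eta k X (src X x) (vadd p q))" using E1 su' ep eq sep by simp
    have "cmp X ?u' (cmp X ?ep ?eq) = cmp X (cmp X ?u' ?ep) ?eq" using assoc[OF u' ep eq su' sep] by simp
    also have "\<dots> = cmp X (cmp X ?erp ?u) ?eq" using c1 by simp
    also have "\<dots> = cmp X ?erp (cmp X ?u ?eq)" using assoc[OF erp u eq] serp ru su by simp
    also have "\<dots> = cmp X ?erp (cmp X ?erq x)" using c2 by simp
    also have "\<dots> = cmp X (cmp X ?erp ?erq) x" using assoc[OF erp erq x] serp serq by simp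
    finally show "cmp X ?u' (eta k X (src X x) (vadd p q)) = cmp X (eta k X (rng X x) (vadd p q)) x"
      using E1 E2 by simp
  qed
qed

lemma alpha_inj:
  assumes p: "supp_in l p" and x: "x \<in> mor X" and y: "y \<in> mor X" and e: "alpha p x = alpha p y"
  shows "x = y"
proof -
  have "rng X (eta k X (src X x) p) = rng X (eta k X (src X y) p)"
    using alpha_src[OF p x] alpha_src[OF p y] e by simp
  hence s: "src X x = src X y" using rng_eta_inj[OF p] x y by simp
  have "cmp X (eta k X (rng X x) p) x = cmp X (eta k X (rng X y) p) y"
    using alpha_char(4)[OF p x] alpha_char(4)[OF p y] e s by simp
  thus ?thesis using fact_unique[of "eta k X (rng X x) p" x "eta k X (rng X y) p" y] p x y by simp
qed

lemma alpha_surj: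
  assumes p: "supp_in l p" and y: "y \<in> mor X"
  shows "\<exists>x. x \<in> mor X \<and> dg X x = dg X y \<and> alpha p x = y"
proof -
  let ?f = "zeta (src X y) p"
  have f: "?f \<in> mor X" "dg X ?f = emb k p" "rng X ?f = src X y" using zeta_props[OF p src_verts[OF y]] by auto
  have m: "cmp X y ?f \<in> mor X" using f y by simp
  have "dg X (cmp X y ?f) = vadd (dg X y) (emb k p)" using f y by simp
  hence d: "dg X (cmp X y ?f) = vadd (emb k p) (dg X y)" by (simp add: vadd_comm)
  obtain e x where ex: "e \<in> mor X" "x \<in> mor X" "src X e = rng X x" "dg X e = emb k p"
    "dg X x = dg X y" "cmp X e x = cmp X y ?f"
    by (rule fact_ex[OF m d])
  have e1: "eta k X (rng X x) p = e" using eta_uniq[OF p ex(1) ex(4)] ex(3) by simp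
  have h1: "src X (cmp X e x) = src X x" using ex(1-3) by simp
  have h2: "src X (cmp X y ?f) = src X ?f" using y f by simp
  have sx: "src X x = src X ?f" using h1 h2 ex(6) by metis
  have f1: "eta k X (src X x) p = ?f" using eta_uniq[OF p f(1) f(2)] sx by simp
  have "alpha p x = y"
  proof (rule alpha_uniq[OF p ex(2) y])
    show "dg X y = dg X x" using ex by simp
    show "src X y = rng X (eta k X (src X x) p)" using f1 f by simp
    show "cmp X y (eta k X (src X x) p) = cmp X (eta k X (rng X x) p) x" using f1 e1 ex(6) by simp
  qed
  thus ?thesis using ex by blast
qed

end


lemma graph_iso_comp:
  assumes "graph_iso G H f" "graph_iso H K g"
  shows "graph_iso G K (\<lambda>x. g (f x))"
proof -
  have bf: "bij_betw f (mor G) (mor H)" and bg: "bij_betw g (mor H) (mor K)"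
    using assms unfolding graph_iso_def by auto
  have "bij_betw (g \<circ> f) (mor G) (mor K)" using bij_betw_trans[OF bf bg] .
  hence b: "bij_betw (\<lambda>x. g (f x)) (mor G) (mor K)" by (simp add: comp_def)
  have F1: "\<forall>x\<in>mor G. f x \<in> mor H \<and> f (src G x) = src H (f x) \<and> f (rng G x) = rng H (f x)"
    and F2: "\<forall>x\<in>mor G. \<forall>y\<in>mor G. src G x = rng G y \<longrightarrow> f (cmp G x y) = cmp H (f x) (f y)"
    and G1: "\<forall>x\<in>mor H. g x \<in> mor K \<and> g (src H x) = src K (g x) \<and> g (rng H x) = rng K (g x)"
    and G2: "\<forall>x\<in>mor H. \<forall>y\<in>mor H. src H x = rng H y \<longrightarrow> g (cmp H x y) = cmp K (g x) (g y)"
    using assms unfolding graph_iso_def is_functor_def by auto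
  have "is_functor G K (\<lambda>x. g (f x))"
    unfolding is_functor_def
  proof (intro conjI ballI impI)
    fix x assume x: "x \<in> mor G"
    show "g (f x) \<in> mor K" "g (f (src G x)) = src K (g (f x))" "g (f (rng G x)) = rng K (g (f x))"
      using F1 G1 x by auto
  next
    fix x y assume x: "x \<in> mor G" and y: "y \<in> mor G" and s: "src G x = rng G y"
    have "src H (f x) = rng H (f y)" using F1 x y s by metis
    thus "g (f (cmp G x y)) = cmp K (g (f x)) (g (f y))" using F1 F2 G2 x y s by simp
  qed
  thus ?thesis using assms b F1 unfolding graph_iso_def by auto
qed

lemma graph_iso_inv:
  assumes gi: "graph_iso G H f"
    and c1: "\<forall>x\<in>mor G. src G x \<in> mor G \<and> rng G x \<in> mor G"
    and c2: "\<forall>x\<in>mor G. \<forall>y\<in>mor G. src G x = rng G y \<longrightarrow> cmp G x y \<in> mor G"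
  shows "graph_iso H G (inv_into (mor G) f)"
proof -
  let ?g = "inv_into (mor G) f"
  have b: "bij_betw f (mor G) (mor H)" and fu: "is_functor G H f" and fd: "\<forall>x\<in>mor G. dg H (f x) = dg G x"
    using gi unfolding graph_iso_def by auto
  have inj: "inj_on f (mor G)" and im: "f ` mor G = mor H" using b by (auto simp: bij_betw_def)
  have bg: "bij_betw ?g (mor H) (mor G)" using bij_betw_inv_into[OF b] .
  have gin: "\<And>y. y \<in> mor H \<Longrightarrow> ?g y \<in> mor G" using bg bij_betwE by blast
  have fg: "\<And>y. y \<in> mor H \<Longrightarrow> f (?g y) = y" using im f_inv_into_f by metis
  have gf: "\<And>x. x \<in> mor G \<Longrightarrow> ?g (f x) = x" using inv_into_f_f[OF inj] by blast
  have F1: "\<forall>x\<in>mor G. f x \<in> mor H \<and> f (src G x) = src H (f x) \<and> f (rng G x) = rng H (f x)"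
    and F2: "\<forall>x\<in>mor G. \<forall>y\<in>mor G. src G x = rng G y \<longrightarrow> f (cmp G x y) = cmp H (f x) (f y)"
    using fu unfolding is_functor_def by auto
  have "is_functor H G ?g"
    unfolding is_functor_def
  proof (intro conjI ballI impI)
    fix y assume y: "y \<in> mor H"
    let ?x = "?g y"
    have x: "?x \<in> mor G" using gin[OF y] .
    show "?x \<in> mor G" using x .
    have "src H y = f (src G ?x)" using F1 x fg[OF y] by metis
    thus "?g (src H y) = src G ?x" using gf c1 x by simp
    have "rng H y = f (rng G ?x)" using F1 x fg[OF y] by metis
    thus "?g (rng H y) = rng G ?x" using gf c1 x by simp
  next
    fix y1 y2 assume y1: "y1 \<in> mor H" and y2: "y2 \<in> mor H" and s: "src H y1 = rng H y2"
    let ?x1 = "?g y1" and ?x2 = "?g y2"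
    have x1: "?x1 \<in> mor G" and x2: "?x2 \<in> mor G" using gin y1 y2 by auto
    have "f (src G ?x1) = f (rng G ?x2)" using F1 x1 x2 fg y1 y2 s by metis
    hence s': "src G ?x1 = rng G ?x2" using inj c1 x1 x2 unfolding inj_on_def by blast
    have "f (cmp G ?x1 ?x2) = cmp H y1 y2" using F2 x1 x2 s' fg y1 y2 by metis
    thus "?g (cmp H y1 y2) = cmp G ?x1 ?x2" using gf c2 x1 x2 s' by metis
  qed
  moreover have "\<forall>y\<in>mor H. dg G (?g y) = dg H y" using fd gin fg by metis
  ultimately show ?thesis using bg unfolding graph_iso_def by blast
qed

definition ext_act :: "'a set \<Rightarrow> ((nat \<Rightarrow> nat) \<Rightarrow> 'a \<Rightarrow> 'a) \<Rightarrow> (nat \<Rightarrow> int) \<Rightarrow> 'a \<Rightarrow> 'a" where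
  "ext_act A f m x = f (\<lambda>i. nat (m i)) (inv_into A (f (\<lambda>i. nat (- m i))) x)"

lemma supp_pos: "supp_in l (m::nat\<Rightarrow>int) \<Longrightarrow> supp_in l (\<lambda>i. nat (m i))" by (simp add: supp_in_def)
lemma supp_neg: "supp_in l (m::nat\<Rightarrow>int) \<Longrightarrow> supp_in l (\<lambda>i. nat (- m i))" by (simp add: supp_in_def)
lemma supp_addi: "supp_in l (m::nat\<Rightarrow>int) \<Longrightarrow> supp_in l n \<Longrightarrow> supp_in l (\<lambda>i. m i + n i)" by (simp add: supp_in_def)

locale monact =
  fixes l :: nat and A :: "'a set" and f :: "(nat \<Rightarrow> nat) \<Rightarrow> 'a \<Rightarrow> 'a"
  assumes bij: "\<And>p. supp_in l p \<Longrightarrow> bij_betw (f p) A A"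
    and zero: "\<And>x. x \<in> A \<Longrightarrow> f (\<lambda>_. 0) x = x"
    and add: "\<And>p q x. supp_in l p \<Longrightarrow> supp_in l q \<Longrightarrow> x \<in> A \<Longrightarrow> f (vadd p q) x = f p (f q x)"
begin

lemma f_in: "supp_in l p \<Longrightarrow> x \<in> A \<Longrightarrow> f p x \<in> A" using bij bij_betwE by blast
lemma f_inj: "supp_in l p \<Longrightarrow> inj_on (f p) A" using bij bij_betw_def by blast
lemma f_comm: "supp_in l p \<Longrightarrow> supp_in l q \<Longrightarrow> x \<in> A \<Longrightarrow> f p (f q x) = f q (f p x)"
  using add vadd_comm by metis

lemma act_props:
  assumes m: "supp_in l m" and x: "x \<in> A"
  shows "ext_act A f m x \<in> A" "f (\<lambda>i. nat (- m i)) (ext_act A f m x) = f (\<lambda>i. nat (m i)) x"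
proof -
  let ?P = "\<lambda>i. nat (m i)" and ?N = "\<lambda>i. nat (- m i)"
  have P: "supp_in l ?P" and N: "supp_in l ?N" using supp_pos supp_neg m by auto
  let ?t = "inv_into A (f ?N) x"
  have "x \<in> f ?N ` A" using bij[OF N] x by (simp add: bij_betw_def)
  hence t: "?t \<in> A" "f ?N ?t = x" by (auto simp: inv_into_into f_inv_into_f)
  show "ext_act A f m x \<in> A" unfolding ext_act_def using f_in[OF P t(1)] .
  show "f ?N (ext_act A f m x) = f ?P x"
    unfolding ext_act_def using f_comm[OF N P t(1)] t(2) by simp
qed

lemma act_uniq:
  assumes m: "supp_in l m" and x: "x \<in> A" and y: "y \<in> A"
    and e: "f (\<lambda>i. nat (- m i)) y = f (\<lambda>i. nat (m i)) x"
  shows "ext_act A f m x = y"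
  using act_props[OF m x] f_inj[OF supp_neg[OF m]] y e unfolding inj_on_def by metis

lemma act_nat: "x \<in> A \<Longrightarrow> supp_in l p \<Longrightarrow> ext_act A f (\<lambda>i. int (p i)) x = f p x"
  by (rule act_uniq) (simp_all add: supp_in_def f_in zero)

lemma act_zero: "x \<in> A \<Longrightarrow> ext_act A f (\<lambda>_. 0) x = x"
  by (rule act_uniq) (simp_all add: supp_in_def zero)

lemma act_add:
  assumes m: "supp_in l m" and n: "supp_in l n" and x: "x \<in> A"
  shows "ext_act A f (\<lambda>i. m i + n i) x = ext_act A f m (ext_act A f n x)"
proof -
  let ?mn = "\<lambda>i. m i + n i"
  let ?P = "\<lambda>i. nat (?mn i)" and ?N = "\<lambda>i. nat (- ?mn i)"
  let ?pm = "\<lambda>i. nat (m i)" and ?nm = "\<lambda>i. nat (- m i)"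
  let ?pn = "\<lambda>i. nat (n i)" and ?nn = "\<lambda>i. nat (- n i)"
  have mn: "supp_in l ?mn" using supp_addi m n by blast
  have P: "supp_in l ?P" using supp_pos[OF mn] .
  have N: "supp_in l ?N" using supp_neg[OF mn] .
  have pm: "supp_in l ?pm" and nm: "supp_in l ?nm" using supp_pos supp_neg m by auto
  have pn: "supp_in l ?pn" and nn: "supp_in l ?nn" using supp_pos supp_neg n by auto
  let ?z = "ext_act A f n x"
  let ?w = "ext_act A f m ?z"
  have z: "?z \<in> A" "f ?nn ?z = f ?pn x" using act_props[OF n x] by auto
  have w: "?w \<in> A" "f ?nm ?w = f ?pm ?z" using act_props[OF m z(1)] by auto
  note V = supp_vadd
  have eq1: "vadd (vadd ?nm ?nn) ?N = vadd (vadd ?nn ?N) ?nm" by (auto simp: fun_eq_iff)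
  have eq2: "vadd (vadd ?nn ?N) ?pm = vadd (vadd ?N ?pm) ?nn" by (auto simp: fun_eq_iff)
  have eq3: "vadd (vadd ?N ?pm) ?pn = vadd (vadd ?nm ?nn) ?P" by (auto simp: fun_eq_iff)
  have "f (vadd ?nm ?nn) (f ?N ?w) = f (vadd (vadd ?nm ?nn) ?N) ?w"
    using add[OF V[OF nm nn] N w(1)] by simp
  also have "\<dots> = f (vadd (vadd ?nn ?N) ?nm) ?w" using eq1 by simp
  also have "\<dots> = f (vadd ?nn ?N) (f ?pm ?z)" using add[OF V[OF nn N] nm w(1)] w(2) by simp
  also have "\<dots> = f (vadd (vadd ?nn ?N) ?pm) ?z" using add[OF V[OF nn N] pm z(1)] by simp
  also have "\<dots> = f (vadd (vadd ?N ?pm) ?nn) ?z" using eq2 by simp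
  also have "\<dots> = f (vadd ?N ?pm) (f ?pn x)" using add[OF V[OF N pm] nn z(1)] z(2) by simp
  also have "\<dots> = f (vadd (vadd ?N ?pm) ?pn) x" using add[OF V[OF N pm] pn x] by simp
  also have "\<dots> = f (vadd (vadd ?nm ?nn) ?P) x" using eq3 by simp
  also have "\<dots> = f (vadd ?nm ?nn) (f ?P x)" using add[OF V[OF nm nn] P x] by simp
  finally have "f (vadd ?nm ?nn) (f ?N ?w) = f (vadd ?nm ?nn) (f ?P x)" .
  hence "f ?N ?w = f ?P x" using f_inj[OF V[OF nm nn]] f_in[OF N w(1)] f_in[OF P x]
    unfolding inj_on_def by blast
  thus ?thesis using act_uniq[OF mn x w(1)] by simp
qed

end


lemma restrictk_simps[simp]:
  "mor (restrictk k X) = {x \<in> mor X. supp_in k (dg X x)}"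
  "src (restrictk k X) = src X" "rng (restrictk k X) = rng X" "cmp (restrictk k X) = cmp X"
  "dg (restrictk k X) = (\<lambda>x i. if i < k then dg X x i else 0)"
  by (simp_all add: restrictk_def)

lemma (in monact) act_negnat:
  assumes x: "x \<in> A" and p: "supp_in l p"
  shows "ext_act A f (\<lambda>i. - int (p i)) (f p x) = x"
proof -
  have m: "supp_in l (\<lambda>i. - int (p i))" using p by (simp add: supp_in_def)
  show ?thesis by (rule act_uniq[OF m f_in[OF p x] x]) (simp add: zero f_in[OF p x])
qed

context kgl
begin

abbreviation "AL \<equiv> {x \<in> mor X. supp_in k (dg X x)}"

lemma supp_dg0: "supp_in k (\<lambda>_. 0::nat)" by (simp add: supp_in_def)

lemma alpha_iso:
  assumes p: "supp_in l p"
  shows "graph_iso (restrictk k X) (restrictk k X) (alpha p)"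
proof -
  have fn: "is_functor (restrictk k X) (restrictk k X) (alpha p)"
    unfolding is_functor_def restrictk_simps
  proof (intro conjI ballI impI)
    fix x assume x: "x \<in> AL"
    hence xm: "x \<in> mor X" by simp
    show "alpha p x \<in> AL" using x p by simp
    show "alpha p (src X x) = src X (alpha p x)" using alpha_vert[OF p src_verts[OF xm]] alpha_src[OF p xm] by simp
    show "alpha p (rng X x) = rng X (alpha p x)" using alpha_vert[OF p rng_verts[OF xm]] alpha_rng[OF p xm] by simp
  next
    fix x y assume "x \<in> AL" "y \<in> AL" "src X x = rng X y"
    thus "alpha p (cmp X x y) = cmp X (alpha p x) (alpha p y)" using alpha_cmp[OF p] by simp
  qed
  have "inj_on (alpha p) AL" using alpha_inj[OF p] unfolding inj_on_def by blast
  moreover have "alpha p ` AL = AL"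
  proof
    show "alpha p ` AL \<subseteq> AL" using p by auto
    show "AL \<subseteq> alpha p ` AL"
    proof
      fix y assume y: "y \<in> AL"
      then obtain x where "x \<in> mor X" "dg X x = dg X y" "alpha p x = y" using alpha_surj[OF p] by blast
      thus "y \<in> alpha p ` AL" using y by force
    qed
  qed
  ultimately have "bij_betw (alpha p) AL AL" by (simp add: bij_betw_def)
  thus ?thesis using fn p unfolding graph_iso_def by auto
qed

lemma L_c1: "\<forall>x\<in>mor (restrictk k X). src (restrictk k X) x \<in> mor (restrictk k X) \<and> rng (restrictk k X) x \<in> mor (restrictk k X)"
  by (simp add: dg_id supp_dg0)
lemma L_c2: "\<forall>x\<in>mor (restrictk k X). \<forall>y\<in>mor (restrictk k X). src (restrictk k X) x = rng (restrictk k X) y \<longrightarrow> cmp (restrictk k X) x y \<in> mor (restrictk k X)"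
  by (simp add: supp_in_def)

lemma monact_alpha: "monact l AL alpha"
proof
  fix p :: "nat \<Rightarrow> nat" assume p: "supp_in l p"
  show "bij_betw (alpha p) AL AL" using alpha_iso[OF p] unfolding graph_iso_def by simp
next
  fix x assume "x \<in> AL" thus "alpha (\<lambda>_. 0) x = x" using alpha_zero by simp
next
  fix p q :: "nat \<Rightarrow> nat" and x assume "supp_in l p" "supp_in l q" "x \<in> AL"
  thus "alpha (vadd p q) x = alpha p (alpha q x)" using alpha_add by simp
qed

interpretation MA: monact l AL alpha by (rule monact_alpha)

definition "act = ext_act AL alpha"

lemma act_nat': "x \<in> AL \<Longrightarrow> supp_in l p \<Longrightarrow> act (intv p) x = alpha p x"
  unfolding act_def intv_def using MA.act_nat by blast

lemma act_iso: "supp_in l m \<Longrightarrow> graph_iso (restrictk k X) (restrictk k X) (act m)"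
proof -
  assume m: "supp_in l m"
  let ?P = "\<lambda>i. nat (m i)" and ?N = "\<lambda>i. nat (- m i)"
  have g1: "graph_iso (restrictk k X) (restrictk k X) (inv_into AL (alpha ?N))"
    using graph_iso_inv[OF alpha_iso[OF supp_neg[OF m]] L_c1 L_c2] by simp
  have "act m = (\<lambda>x. alpha ?P (inv_into AL (alpha ?N) x))" unfolding act_def ext_act_def by simp
  thus ?thesis using graph_iso_comp[OF g1 alpha_iso[OF supp_pos[OF m]]] by simp
qed

lemma act_prop36: "prop36_action k l X act"
  unfolding prop36_action_def is_action_def
proof (intro conjI allI impI ballI)
  fix m :: "nat \<Rightarrow> int" assume "supp_in l m"
  thus "graph_iso (restrictk k X) (restrictk k X) (act m)" by (rule act_iso)
next
  fix x assume "x \<in> mor (restrictk k X)"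
  thus "act (\<lambda>_. 0) x = x" unfolding act_def using MA.act_zero by simp
next
  fix m n :: "nat \<Rightarrow> int" and x assume "supp_in l m" "supp_in l n" "x \<in> mor (restrictk k X)"
  thus "act (\<lambda>i. m i + n i) x = act m (act n x)" unfolding act_def using MA.act_add by simp
next
  fix x and m :: "nat \<Rightarrow> nat" assume "x \<in> mor (restrictk k X)" "supp_in l m"
  thus "act (intv m) x = seg X (cmp X (eta k X (rng X x) m) x) (dg X x)"
    using act_nat' unfolding alpha_def by simp
qed

lemma act_unique:
  assumes b: "prop36_action k l X b" and m: "supp_in l m" and x: "x \<in> AL"
  shows "b m x = act m x"
proof -
  have B1: "\<And>m. supp_in l m \<Longrightarrow> graph_iso (restrictk k X) (restrictk k X) (b m)"
    and B3: "\<And>m n x. supp_in l m \<Longrightarrow> supp_in l n \<Longrightarrow> x \<in> AL \<Longrightarrow> b (\<lambda>i. m i + n i) x = b m (b n x)"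
    and B2: "\<And>x. x \<in> AL \<Longrightarrow> b (\<lambda>_. 0) x = x"
    and B4: "\<And>x p. x \<in> AL \<Longrightarrow> supp_in l p \<Longrightarrow> b (intv p) x = alpha p x"
    using b unfolding prop36_action_def is_action_def alpha_def by auto
  let ?P = "\<lambda>i. nat (m i)" and ?N = "\<lambda>i. nat (- m i)"
  have P: "supp_in l ?P" and N: "supp_in l ?N" using supp_pos[OF m] supp_neg[OF m] by auto
  let ?mn = "\<lambda>i. - int (?N i)"
  have mn: "supp_in l ?mn" using m by (simp add: supp_in_def)
  have iP: "supp_in l (intv ?P)" and iN: "supp_in l (intv ?N)" using P N by (simp_all only: supp_in_def intv_def) simp_all
  have e1: "(\<lambda>i. intv ?P i + ?mn i) = m" by (auto simp: fun_eq_iff intv_def)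
  have e2: "(\<lambda>i. intv ?N i + ?mn i) = (\<lambda>_. 0)" by (auto simp: fun_eq_iff intv_def)
  let ?y = "b ?mn x"
  have y: "?y \<in> AL" using B1[OF mn] x unfolding graph_iso_def bij_betw_def by auto
  have bm: "b m x = b (intv ?P) ?y" using B3[OF iP mn x] e1 by simp
  have "b (intv ?N) ?y = x" using B3[OF iN mn x] e2 B2[OF x] by simp
  hence yN: "alpha ?N ?y = x" using B4[OF y N] by simp
  have bm2: "b m x = alpha ?P ?y" using bm B4[OF y P] by simp
  have "act m x = alpha ?P ?y"
    unfolding act_def
  proof (rule MA.act_uniq[OF m x])
    show "alpha ?P ?y \<in> AL" using MA.f_in[OF P y] .
    show "alpha ?N (alpha ?P ?y) = alpha ?P x" using MA.f_comm[OF N P y] yN by simp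
  qed
  thus ?thesis using bm2 by simp
qed

end


context kgl
begin

definition "pk x = (\<lambda>i. if i < k then dg X x i else 0)"
definition "ql x = (\<lambda>j. dg X x (k + j))"
definition "Fm x = (seg X x (pk x), ql x)"

lemma ql_supp: "x \<in> mor X \<Longrightarrow> supp_in l (ql x)"
  using dg_supp[of x] unfolding supp_in_def ql_def by auto

lemma pk_supp: "supp_in k (pk x)" unfolding supp_in_def pk_def by auto

lemma dg_decomp: "x \<in> mor X \<Longrightarrow> dg X x = vadd (pk x) (emb k (ql x))"
  by (auto simp: fun_eq_iff pk_def ql_def emb_def)

lemma decomp:
  assumes x: "x \<in> mor X"
  shows "seg X x (pk x) \<in> mor X" "dg X (seg X x (pk x)) = pk x"
    "src X (seg X x (pk x)) = rng X (eta k X (src X x) (ql x))"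
    "cmp X (seg X x (pk x)) (eta k X (src X x) (ql x)) = x"
    "rng X (seg X x (pk x)) = rng X x"
proof -
  obtain u w where uw: "u \<in> mor X" "w \<in> mor X" "src X u = rng X w" "dg X u = pk x"
    "dg X w = emb k (ql x)" "cmp X u w = x"
    by (rule fact_ex[OF x dg_decomp[OF x]])
  have s: "seg X x (pk x) = u" by (rule seg_eq[OF uw(1-3) uw(6) uw(4)])
  have "src X (cmp X u w) = src X w" using uw(1-3) by simp
  hence sw: "src X w = src X x" using uw(6) by simp
  have w: "eta k X (src X x) (ql x) = w" using eta_uniq[OF ql_supp[OF x] uw(2) uw(5)] sw by simp
  have "rng X (cmp X u w) = rng X u" using uw(1-3) by simp
  hence ru: "rng X u = rng X x" using uw(6) by simp
  show "seg X x (pk x) \<in> mor X" "dg X (seg X x (pk x)) = pk x"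
    "src X (seg X x (pk x)) = rng X (eta k X (src X x) (ql x))"
    "cmp X (seg X x (pk x)) (eta k X (src X x) (ql x)) = x"
    "rng X (seg X x (pk x)) = rng X x"
    using s w uw ru by simp_all
qed

lemma Fm_vert: "v \<in> verts X \<Longrightarrow> Fm v = (v, \<lambda>_. 0)"
proof -
  assume v: "v \<in> verts X"
  have p: "pk v = (\<lambda>_. 0)" "ql v = (\<lambda>_. 0)" using v by (auto simp: pk_def ql_def fun_eq_iff)
  have "seg X v (\<lambda>_. 0) = v" by (rule seg_eq[of v v]) (use v cmp_src[of v] in simp_all)
  thus ?thesis using p by (simp add: Fm_def)
qed

lemma Fm_cmp:
  assumes x: "x \<in> mor X" and y: "y \<in> mor X" and xy: "src X x = rng X y"
  shows "Fm (cmp X x y) = (cmp X (seg X x (pk x)) (alpha (ql x) (seg X y (pk y))), vadd (ql x) (ql y))"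
proof -
  let ?l1 = "seg X x (pk x)" and ?l2 = "seg X y (pk y)"
  let ?q1 = "ql x" and ?q2 = "ql y"
  let ?e1 = "eta k X (src X x) ?q1" and ?e2 = "eta k X (src X y) ?q2"
  let ?b = "alpha ?q1 ?l2" and ?e' = "eta k X (src X ?l2) ?q1"
  have q1: "supp_in l ?q1" and q2: "supp_in l ?q2" using ql_supp x y by auto
  have l1: "?l1 \<in> mor X" "src X ?l1 = rng X ?e1" "cmp X ?l1 ?e1 = x" "dg X ?l1 = pk x"
    using decomp[OF x] by auto
  have l2: "?l2 \<in> mor X" "src X ?l2 = rng X ?e2" "cmp X ?l2 ?e2 = y" "rng X ?l2 = rng X y" "dg X ?l2 = pk y"
    using decomp[OF y] by auto
  have e1: "?e1 \<in> mor X" using q1 x by simp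
  have e2: "?e2 \<in> mor X" "src X ?e2 = src X y" using q2 y by simp_all
  have e1': "?e1 = eta k X (rng X ?l2) ?q1" using l2(4) xy by simp
  have e': "?e' \<in> mor X" "src X ?e' = src X ?l2" using q1 l2(1) by simp_all
  have b: "?b \<in> mor X" using q1 l2 by simp
  have sb: "src X ?b = rng X ?e'" using alpha_src[OF q1 l2(1)] .
  have cb: "cmp X ?b ?e' = cmp X ?e1 ?l2" using alpha_char(4)[OF q1 l2(1)] e1' by simp
  have rb: "rng X ?b = rng X ?e1" using alpha_rng[OF q1 l2(1)] e1' by simp
  have s1b: "src X ?l1 = rng X ?b" using l1(2) rb by simp
  have se'2: "src X ?e' = rng X ?e2" using e'(2) l2(2) by simp
  have se1: "src X ?e1 = rng X ?l2" using e1' q1 l2(1) by simp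
  have "cmp X (cmp X ?l1 ?b) (cmp X ?e' ?e2) = cmp X ?l1 (cmp X ?b (cmp X ?e' ?e2))"
    using assoc[OF l1(1) b _ s1b] e' e2 se'2 sb by simp
  also have "\<dots> = cmp X ?l1 (cmp X (cmp X ?b ?e') ?e2)" using assoc[OF b e'(1) e2(1) sb se'2] by simp
  also have "\<dots> = cmp X ?l1 (cmp X (cmp X ?e1 ?l2) ?e2)" using cb by simp
  also have "\<dots> = cmp X ?l1 (cmp X ?e1 (cmp X ?l2 ?e2))" using assoc[OF e1 l2(1) e2(1) se1 l2(2)] by simp
  also have "\<dots> = cmp X (cmp X ?l1 ?e1) (cmp X ?l2 ?e2)" using assoc[OF l1(1) e1 cmp_mor[OF l2(1) e2(1) l2(2)] l1(2)] rng_cmp[OF l2(1) e2(1) l2(2)] se1 by simp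
  also have "\<dots> = cmp X x y" using l1(3) l2(3) by simp
  finally have c: "cmp X (cmp X ?l1 ?b) (cmp X ?e' ?e2) = cmp X x y" .
  have pk: "pk (cmp X x y) = vadd (pk x) (pk y)" using x y xy by (auto simp: pk_def fun_eq_iff)
  have d: "dg X (cmp X ?l1 ?b) = pk (cmp X x y)" using l1 b s1b l2(5) q1 l2(1) pk by simp
  have "seg X (cmp X x y) (pk (cmp X x y)) = cmp X ?l1 ?b"
    by (rule seg_eq[OF _ _ _ c d]) (use l1(1) b s1b e' e2 se'2 sb in simp_all)
  moreover have "ql (cmp X x y) = vadd ?q1 ?q2" using x y xy by (auto simp: ql_def fun_eq_iff)
  ultimately show ?thesis by (simp add: Fm_def)
qed

end


lemma crossed_simps[simp]:
  "mor (crossed k l L a) = {(x, m). x \<in> mor L \<and> supp_in l m}"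
  "src (crossed k l L a) (x, m) = (a (\<lambda>i. - int (m i)) (src L x), (\<lambda>_. 0))"
  "rng (crossed k l L a) (x, m) = (rng L x, (\<lambda>_. 0))"
  "cmp (crossed k l L a) (x, m) (y, n) = (cmp L x (a (intv m) y), vadd m n)"
  "dg (crossed k l L a) (x, m) = (\<lambda>i. if i < k then dg L x i else m (i - k))"
  by (simp_all add: crossed_def)

context kgl
begin

lemma Fm_mor: "x \<in> mor X \<Longrightarrow> Fm x \<in> mor (crossed k l (restrictk k X) act)"
  using decomp[of x] pk_supp ql_supp by (simp add: Fm_def)

lemma Fm_iso: "graph_iso X (crossed k l (restrictk k X) act) Fm"
proof -
  let ?C = "crossed k l (restrictk k X) act"
  have fn: "is_functor X ?C Fm"
    unfolding is_functor_def
  proof (intro conjI ballI impI)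
    fix x assume x: "x \<in> mor X"
    show "Fm x \<in> mor ?C" using Fm_mor[OF x] .
    have sx: "src X x \<in> AL" using x by (simp add: dg_id supp_dg0)
    have "src X (seg X x (pk x)) = alpha (ql x) (src X x)"
      using decomp(3)[OF x] alpha_vert[OF ql_supp[OF x] src_verts[OF x]] by simp
    hence "act (\<lambda>i. - int (ql x i)) (src X (seg X x (pk x))) = src X x"
      using monact.act_negnat[OF monact_alpha sx ql_supp[OF x]] unfolding act_def by simp
    thus "Fm (src X x) = src ?C (Fm x)" using Fm_vert[OF src_verts[OF x]] by (simp add: Fm_def)
    show "Fm (rng X x) = rng ?C (Fm x)" using Fm_vert[OF rng_verts[OF x]] decomp(5)[OF x] by (simp add: Fm_def)
  next
    fix x y assume x: "x \<in> mor X" and y: "y \<in> mor X" and xy: "src X x = rng X y"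
    have l2: "seg X y (pk y) \<in> AL" using decomp(1,2)[OF y] pk_supp by simp
    show "Fm (cmp X x y) = cmp ?C (Fm x) (Fm y)"
      using Fm_cmp[OF x y xy] act_nat'[OF l2 ql_supp[OF x]] by (simp add: Fm_def)
  qed
  have dg: "\<forall>x\<in>mor X. dg ?C (Fm x) = dg X x"
  proof
    fix x assume x: "x \<in> mor X"
    have "dg X (seg X x (pk x)) = pk x" using decomp(2)[OF x] .
    thus "dg ?C (Fm x) = dg X x" using dg_supp[OF x]
      by (auto simp: Fm_def pk_def ql_def fun_eq_iff)
  qed
  have inj: "inj_on Fm (mor X)"
  proof
    fix x y assume x: "x \<in> mor X" and y: "y \<in> mor X" and e: "Fm x = Fm y"
    have s: "seg X x (pk x) = seg X y (pk y)" and q: "ql x = ql y" using e by (auto simp: Fm_def)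
    have "rng X (eta k X (src X x) (ql x)) = rng X (eta k X (src X y) (ql x))"
      using decomp(3)[OF x] decomp(3)[OF y] s q by simp
    hence "src X x = src X y" using rng_eta_inj[OF ql_supp[OF x]] x y by simp
    thus "x = y" using decomp(4)[OF x] decomp(4)[OF y] s q by metis
  qed
  have im: "Fm ` mor X = mor ?C"
  proof
    show "Fm ` mor X \<subseteq> mor ?C" using Fm_mor by blast
    show "mor ?C \<subseteq> Fm ` mor X"
    proof
      fix z assume "z \<in> mor ?C"
      then obtain lam q where z: "z = (lam, q)" and lam: "lam \<in> mor X" "supp_in k (dg X lam)"
        and q: "supp_in l q" by auto
      let ?f = "zeta (src X lam) q"
      have f: "?f \<in> mor X" "dg X ?f = emb k q" "rng X ?f = src X lam"
        using zeta_props[OF q src_verts[OF lam(1)]] by auto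
      let ?x = "cmp X lam ?f"
      have xm: "?x \<in> mor X" using lam f by simp
      have dx: "dg X ?x = vadd (dg X lam) (emb k q)" using lam f by simp
      have pkx: "pk ?x = dg X lam" using dx lam(2) unfolding supp_in_def
        by (auto simp: pk_def fun_eq_iff emb_def)
      have qlx: "ql ?x = q" using dx lam(2) unfolding supp_in_def
        by (auto simp: ql_def fun_eq_iff emb_def)
      have "seg X ?x (dg X lam) = lam" by (rule seg_eq[OF lam(1) f(1)]) (use f in simp_all)
      hence "Fm ?x = z" using z pkx qlx by (simp add: Fm_def)
      thus "z \<in> Fm ` mor X" using xm by force
    qed
  qed
  show ?thesis unfolding graph_iso_def bij_betw_def using fn dg inj im by blast
qed

lemma main:
  "(\<forall>v\<in>verts X. \<forall>m. supp_in l m \<longrightarrow>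
            (\<exists>!e. e \<in> mor X \<and> dg X e = emb k m \<and> src X e = v)) \<and>
         (\<exists>a. prop36_action k l X a \<and>
            (\<forall>b. prop36_action k l X b \<longrightarrow>
               (\<forall>m. supp_in l m \<longrightarrow> (\<forall>x\<in>mor (restrictk k X). b m x = a m x))) \<and>
            (\<exists>F. graph_iso X (crossed k l (restrictk k X) a) F))"
proof (intro conjI)
  show "\<forall>v\<in>verts X. \<forall>m. supp_in l m \<longrightarrow> (\<exists>!e. e \<in> mor X \<and> dg X e = emb k m \<and> src X e = v)"
    using path_src by blast
  show "\<exists>a. prop36_action k l X a \<and>
            (\<forall>b. prop36_action k l X b \<longrightarrow>
               (\<forall>m. supp_in l m \<longrightarrow> (\<forall>x\<in>mor (restrictk k X). b m x = a m x))) \<and>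
            (\<exists>F. graph_iso X (crossed k l (restrictk k X) a) F)"
    using act_prop36 act_unique Fm_iso by auto
qed

end

theorem proposition3p6:
  fixes k l :: nat and X :: "'a kgraph"
  assumes "kgraph (k + l) X"
    and "\<forall>v\<in>verts X. \<forall>j<l.
           card {x \<in> mor X. dg X x = emb k (unitv j) \<and> rng X x = v} = 1 \<and>
           card {x \<in> mor X. dg X x = emb k (unitv j) \<and> src X x = v} = 1"
  shows "(\<forall>v\<in>verts X. \<forall>m. supp_in l m \<longrightarrow>
            (\<exists>!e. e \<in> mor X \<and> dg X e = emb k m \<and> src X e = v)) \<and>
         (\<exists>a. prop36_action k l X a \<and>
            (\<forall>b. prop36_action k l X b \<longrightarrow>
               (\<forall>m. supp_in l m \<longrightarrow> (\<forall>x\<in>mor (restrictk k X). b m x = a m x))) \<and>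
            (\<exists>F. graph_iso X (crossed k l (restrictk k X) a) F))"
proof -
  interpret kgl k l X
    by (rule kgl.intro[OF kg.intro[OF assms(1)]]) (unfold_locales; fact assms(2))
  show ?thesis by (rule main)
qed


end
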